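(* Let $F:\mathbb{R}^N\times\mathbb{R}\times\mathbb{R}^N\times S^N\to\mathbb{R}$ be continuous and uniformly elliptic: there are $0<\lambda\le\Lambda$ with $\lambda\,\mathrm{tr}(Q)\le F(x,t,p,X)-F(x,t,p,X+Q)\le\Lambda\,\mathrm{tr}(Q)$ for all $x,p,t,X$ and all $Q\in S^N$, $Q\ge0$. Assume $F(x,t,p,0)\ge-\bar b(x)\cdot p-g(x)|p|+\bar c(x)t$ for all $x,t,p$, where $\bar b:\mathbb{R}^N\to\mathbb{R}^N$ and $g:\mathbb{R}^N\to\mathbb{R}$ are locally Lipschitz, $\bar c:\mathbb{R}^N\to\mathbb{R}$ is continuous, $g\ge0$, $\bar c\ge0$, and for some $R_o>0$ $$\bar b(x)\cdot x+g(x)|x|\le\bar c(x)|x|^2\log|x|+\lambda-(N-1)\Lambda\quad\text{for }|x|\ge R_o.$$ Let $u\in USC(\mathbb{R}^N)$ be a viscosity subsolution of $F(x,u,Du,D^2u)=0$ in $\mathbb{R}^N$ with $\limsup_{|x|\to\infty}u(x)/\log|x|\le0$. If either $\bar c\equiv0$ or $u\ge0$, then $u$ is constant.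
   Context: $S^N$ is the space of real symmetric $N\times N$ matrices. *)

theory Defs
  imports "HOL-Analysis.Analysis"
begin

definition usc :: "('a::topological_space \<Rightarrow> real) \<Rightarrow> bool" where
  "usc u \<longleftrightarrow> (\<forall>x a. u x < a \<longrightarrow> (\<forall>\<^sub>F y in at x. u y < a))"

definition symmetric_mat :: "real^'n^'n \<Rightarrow> bool" where
  "symmetric_mat X \<longleftrightarrow> transpose X = X"

definition psd :: "real^'n^'n \<Rightarrow> bool" where
  "psd Q \<longleftrightarrow> symmetric_mat Q \<and> (\<forall>v. 0 \<le> v \<bullet> (Q *v v))"

definition loc_lipschitz :: "('a::metric_space \<Rightarrow> 'b::metric_space) \<Rightarrow> bool" where
  "loc_lipschitz f \<longleftrightarrow> (\<forall>x. \<exists>r>0. \<exists>L. L-lipschitz_on (cball x r) f)"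

definition C2_with :: "(real^'n \<Rightarrow> real) \<Rightarrow> (real^'n \<Rightarrow> real^'n) \<Rightarrow> (real^'n \<Rightarrow> real^'n^'n) \<Rightarrow> bool" where
  "C2_with phi Dphi Hphi \<longleftrightarrow>
     (\<forall>x. (phi has_derivative (\<lambda>h. Dphi x \<bullet> h)) (at x)) \<and>
     (\<forall>x. (Dphi has_derivative (\<lambda>h. Hphi x *v h)) (at x)) \<and>
     continuous_on UNIV Hphi"

text \<open>Ellipticity convention: F is nonincreasing in the matrix variable.\<close>
definition visc_subsolution ::
  "(real^'n \<Rightarrow> real \<Rightarrow> real^'n \<Rightarrow> real^'n^'n \<Rightarrow> real) \<Rightarrow> (real^'n \<Rightarrow> real) \<Rightarrow> bool" where
  "visc_subsolution F u \<longleftrightarrow> usc u \<and>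
     (\<forall>phi Dphi Hphi x0. C2_with phi Dphi Hphi \<and>
        (\<forall>\<^sub>F x in at x0. u x - phi x \<le> u x0 - phi x0)
        \<longrightarrow> F x0 (u x0) (Dphi x0) (Hphi x0) \<le> 0)"

end

theory Submission
  imports Defs
begin


definition outer :: "real^'n \<Rightarrow> real^'n \<Rightarrow> real^'n^'n" where
  "outer d e = (\<chi> i j. d$i * e$j)"

lemma trace_outer: "trace (outer d d) = d \<bullet> d"
  by (simp add: trace_def outer_def inner_vec_def)

lemma trace_scaleR: "trace (c *\<^sub>R (A::real^'n^'n)) = c * trace A"
  by (simp add: trace_def sum_distrib_left)

lemma outer_mv: "outer d e *v v = (e \<bullet> v) *\<^sub>R d"
  by (simp add: outer_def matrix_vector_mult_def inner_vec_def vec_eq_iff sum_distrib_left algebra_simps)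

lemma scaleR_mv: "(c *\<^sub>R (A::real^'n^'n)) *v v = c *\<^sub>R (A *v v)"
  by (simp add: matrix_vector_mult_def vec_eq_iff sum_distrib_left algebra_simps)

lemma add_mv: "((A::real^'n^'n) + B) *v v = A *v v + B *v v"
  by (simp add: matrix_vector_mult_add_rdistrib)

lemma sym_outer: "symmetric_mat (outer d d)"
  by (simp add: symmetric_mat_def outer_def transpose_def vec_eq_iff mult.commute)

lemma sym_mat1: "symmetric_mat (mat 1 :: real^'n^'n)"
  by (simp add: symmetric_mat_def)

lemma sym_scaleR: "symmetric_mat A \<Longrightarrow> symmetric_mat (c *\<^sub>R A)"
  by (simp add: symmetric_mat_def transpose_scalar)

lemma sym_add: "symmetric_mat A \<Longrightarrow> symmetric_mat B \<Longrightarrow> symmetric_mat (A + B)"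
  by (simp add: symmetric_mat_def transpose_def vec_eq_iff)

lemma sym_uminus: "symmetric_mat A \<Longrightarrow> symmetric_mat (- A)"
  by (simp add: symmetric_mat_def transpose_def vec_eq_iff)

lemma sym_0: "symmetric_mat (0::real^'n^'n)"
  by (simp add: symmetric_mat_def transpose_def vec_eq_iff)

lemma psd_outer: "c \<ge> 0 \<Longrightarrow> psd (c *\<^sub>R outer d d)"
  by (simp add: psd_def sym_scaleR sym_outer scaleR_mv outer_mv inner_commute[of _ d] mult.assoc)

lemma psd_proj:
  assumes "a \<ge> 0" "d \<noteq> 0"
  shows "psd (a *\<^sub>R (mat 1 - (1/(d\<bullet>d)) *\<^sub>R outer d d))"
proof -
  have s: "symmetric_mat (mat 1 - (1/(d\<bullet>d)) *\<^sub>R outer d d)"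
    using sym_add[OF sym_mat1 sym_uminus[OF sym_scaleR[OF sym_outer]]] by simp
  have "0 \<le> v \<bullet> ((mat 1 - (1/(d\<bullet>d)) *\<^sub>R outer d d) *v v)" for v
  proof -
    have dd: "d \<bullet> d > 0" using assms by simp
    have cs: "(d \<bullet> v)^2 \<le> (d\<bullet>d) * (v \<bullet> v)"
      by (metis Cauchy_Schwarz_ineq)
    have "(mat 1 - (1/(d\<bullet>d)) *\<^sub>R outer d d) *v v = v - ((d\<bullet>v)/(d\<bullet>d)) *\<^sub>R d"
      by (simp add: matrix_vector_mult_diff_rdistrib scaleR_mv outer_mv)
    hence "v \<bullet> ((mat 1 - (1/(d\<bullet>d)) *\<^sub>R outer d d) *v v) = v\<bullet>v - (d\<bullet>v)^2/(d\<bullet>d)"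
      by (simp add: inner_diff_right power2_eq_square inner_commute)
    also have "\<dots> \<ge> 0" using cs dd by (simp add: field_simps)
    finally show ?thesis .
  qed
  thus ?thesis using assms s by (simp add: psd_def sym_scaleR scaleR_mv)
qed

lemma F_radial_bound:
  fixes F :: "real^'n \<Rightarrow> real \<Rightarrow> real^'n \<Rightarrow> real^'n^'n \<Rightarrow> real"
  assumes elliptic: "\<And>x t p X Q. symmetric_mat X \<Longrightarrow> psd Q \<Longrightarrow>
        lam * trace Q \<le> F x t p X - F x t p (X + Q) \<and> F x t p X - F x t p (X + Q) \<le> Lam * trace Q"
    and a: "a \<ge> 0" and ab: "a + b*(d\<bullet>d) \<le> 0" and d: "d \<noteq> 0"
  shows "F x t p (a *\<^sub>R mat 1 + b *\<^sub>R outer d d) \<ge>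
           F x t p 0 - Lam * a * (real CARD('n) - 1) - lam*(a + b*(d\<bullet>d))"
proof -
  define s where "s = d \<bullet> d"
  have s: "s > 0" using d by (simp add: s_def)
  define c where "c = (- (a + b * s)) / s"
  have c: "c \<ge> 0" using ab s by (simp add: c_def s_def divide_nonpos_pos)
  define P where "P = a *\<^sub>R (mat 1 - (1/s) *\<^sub>R outer d d)"
  define Nn where "Nn = c *\<^sub>R outer d d"
  have P: "psd P" unfolding P_def s_def by (rule psd_proj[OF a d])
  have Nn: "psd Nn" unfolding Nn_def by (rule psd_outer[OF c])
  have sN: "symmetric_mat (- Nn)" unfolding Nn_def by (intro sym_uminus sym_scaleR sym_outer)
  have trN: "trace Nn = -(a + b * s)"
    using s by (simp add: Nn_def trace_scaleR trace_outer c_def s_def)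
  have trP: "trace P = a * (real CARD('n) - 1)"
    using s by (simp add: P_def trace_scaleR trace_sub trace_I trace_outer s_def)
  have coef: "- c - a/s = b" using s by (simp add: c_def field_simps)
  have X: "- Nn + P = a *\<^sub>R mat 1 + b *\<^sub>R outer d d"
  proof -
    have "- Nn + P = a *\<^sub>R mat 1 + (- c - a/s) *\<^sub>R outer d d"
      by (simp add: P_def Nn_def algebra_simps scaleR_diff_right scaleR_add_left)
    thus ?thesis using coef by simp
  qed
  have e1: "lam * trace Nn \<le> F x t p (- Nn) - F x t p 0"
    using elliptic[OF sN Nn, of x t p] by simp
  have e2: "F x t p (- Nn) - F x t p (- Nn + P) \<le> Lam * trace P"
    using elliptic[OF sN P, of x t p] by simp
  have e2': "F x t p (- Nn) - F x t p (a *\<^sub>R mat 1 + b *\<^sub>R outer d d) \<le> Lam * (a * (real CARD('n) - 1))"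
    using e2 X trP by simp
  have e1': "lam * (-(a + b * (d\<bullet>d))) \<le> F x t p (- Nn) - F x t p 0"
    using e1 trN by (simp add: s_def)
  show ?thesis using e1' e2' by (simp add: algebra_simps)
qed

lemma q_deriv: "((\<lambda>x. (x-c)\<bullet>(x-c)) has_derivative (\<lambda>k. (2 *\<^sub>R (x - c)) \<bullet> k)) (at (x::real^'n))"
  apply (rule has_derivative_eq_rhs)
   apply (rule derivative_eq_intros | simp)+
  apply (auto simp: inner_commute algebra_simps fun_eq_iff inner_add_left)
  done

lemma C2_radial:
  fixes c :: "real^'n"
  assumes h1: "\<And>s. s \<ge> 0 \<Longrightarrow> (h has_real_derivative h1 s) (at s)"
      and h2: "\<And>s. s \<ge> 0 \<Longrightarrow> (h1 has_real_derivative h2 s) (at s)"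
      and h2c: "\<And>s. s \<ge> 0 \<Longrightarrow> isCont h2 s"
  shows "C2_with (\<lambda>x. h ((x-c)\<bullet>(x-c))) (\<lambda>x. (2 * h1 ((x-c)\<bullet>(x-c))) *\<^sub>R (x - c))
     (\<lambda>x. (2 * h1 ((x-c)\<bullet>(x-c))) *\<^sub>R mat 1 + (4 * h2 ((x-c)\<bullet>(x-c))) *\<^sub>R outer (x-c) (x-c))"
  unfolding C2_with_def
proof (intro conjI allI)
  fix x :: "real^'n"
  define s where "s = (x-c)\<bullet>(x-c)"
  have s0: "s \<ge> 0" by (simp add: s_def)
  have "((\<lambda>x. h ((x-c)\<bullet>(x-c))) has_derivative (\<lambda>k. h1 s * ((2 *\<^sub>R (x - c)) \<bullet> k))) (at x)"
    using has_derivative_compose[OF q_deriv, of h "(*) (h1 s)"] h1[OF s0]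
    unfolding has_field_derivative_def s_def by simp
  thus "((\<lambda>x. h ((x-c)\<bullet>(x-c))) has_derivative (\<lambda>k. (2 * h1 ((x-c)\<bullet>(x-c))) *\<^sub>R (x - c) \<bullet> k)) (at x)"
    by (rule has_derivative_eq_rhs) (auto simp: s_def fun_eq_iff)
  have d1: "((\<lambda>x. h1 ((x-c)\<bullet>(x-c))) has_derivative (\<lambda>k. h2 s * ((2 *\<^sub>R (x - c)) \<bullet> k))) (at x)"
    using has_derivative_compose[OF q_deriv, of h1 "(*) (h2 s)"] h2[OF s0]
    unfolding has_field_derivative_def s_def by simp
  have "((\<lambda>x. (2 * h1 ((x-c)\<bullet>(x-c))) *\<^sub>R (x - c)) has_derivative
      (\<lambda>k. (2 * h1 s) *\<^sub>R k + (2 * (h2 s * ((2 *\<^sub>R (x - c)) \<bullet> k))) *\<^sub>R (x - c))) (at x)"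
    apply (rule has_derivative_eq_rhs)
     apply (rule has_derivative_scaleR)
      apply (rule has_derivative_mult_right[OF d1])
     apply (rule derivative_eq_intros | simp)+
    apply (auto simp: s_def fun_eq_iff algebra_simps)
    done
  thus "((\<lambda>x. (2 * h1 ((x-c)\<bullet>(x-c))) *\<^sub>R (x - c)) has_derivative
      (\<lambda>k. ((2 * h1 ((x-c)\<bullet>(x-c))) *\<^sub>R mat 1 + (4 * h2 ((x-c)\<bullet>(x-c))) *\<^sub>R outer (x-c) (x-c)) *v k)) (at x)"
    by (rule has_derivative_eq_rhs) (auto simp: s_def fun_eq_iff add_mv scaleR_mv outer_mv algebra_simps inner_commute)
next
  have qc: "continuous_on UNIV (\<lambda>x::real^'n. (x-c)\<bullet>(x-c))" by (intro continuous_intros)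
  have hc: "continuous_on UNIV (\<lambda>x::real^'n. h1 ((x-c)\<bullet>(x-c)))"
  proof -
    have "isCont h1 s" if "s \<ge> 0" for s using h2[OF that] by (rule DERIV_isCont)
    thus ?thesis using qc by (auto simp: continuous_on_eq_continuous_at intro!: continuous_at_compose[where f="\<lambda>x. (x-c)\<bullet>(x-c)" and g=h1, unfolded o_def] continuous_intros)
  qed
  have h2c': "continuous_on UNIV (\<lambda>x::real^'n. h2 ((x-c)\<bullet>(x-c)))"
    using qc h2c by (auto simp: continuous_on_eq_continuous_at intro!: continuous_at_compose[where f="\<lambda>x. (x-c)\<bullet>(x-c)" and g=h2, unfolded o_def] continuous_intros)
  have oc: "continuous_on UNIV (\<lambda>x::real^'n. outer (x-c) (x-c))"
    unfolding outer_def by (intro continuous_intros continuous_on_vec_lambda continuous_on_component)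
  show "continuous_on UNIV (\<lambda>x. (2 * h1 ((x-c)\<bullet>(x-c))) *\<^sub>R mat 1 + (4 * h2 ((x-c)\<bullet>(x-c))) *\<^sub>R outer (x-c) (x-c))"
    by (intro continuous_intros hc h2c' oc)
qed

lemma usc_open:
  assumes "usc f" shows "open {x. f x < a}"
proof (subst open_subopen, intro ballI)
  fix x assume "x \<in> {x. f x < a}"
  hence fx: "f x < a" by simp
  with assms have "\<forall>\<^sub>F y in at x. f y < a" unfolding usc_def by blast
  then obtain T where T: "open T" "x \<in> T" "\<And>y. y \<in> T \<Longrightarrow> y \<noteq> x \<Longrightarrow> f y < a"
    unfolding eventually_at_topological by blast
  show "\<exists>T. open T \<and> x \<in> T \<and> T \<subseteq> {x. f x < a}"
    using T fx by (intro exI[of _ T]) auto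
qed

lemma usc_diff_cont:
  assumes "usc u" "continuous_on UNIV phi"
  shows "usc (\<lambda>x. u x - phi x)"
  unfolding usc_def
proof (intro allI impI)
  fix x a assume "u x - phi x < a"
  define e where "e = a + phi x - u x"
  have e: "e > 0" using \<open>u x - phi x < a\<close> by (simp add: e_def)
  have 1: "\<forall>\<^sub>F y in at x. u y < u x + e/2"
    using assms(1) e unfolding usc_def by simp
  have "(phi \<longlongrightarrow> phi x) (at x)"
    using assms(2) by (metis UNIV_I continuous_on_def continuous_within tendsto_within_open open_UNIV)
  hence 2: "\<forall>\<^sub>F y in at x. dist (phi y) (phi x) < e/2"
    using e unfolding tendsto_iff by (metis half_gt_zero)
  show "\<forall>\<^sub>F y in at x. u y - phi y < a"
    using 1 2
  proof eventually_elim
    case (elim y)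
    have "phi x - phi y \<le> dist (phi y) (phi x)" by (simp add: dist_real_def)
    thus ?case using elim unfolding e_def by (smt (verit) field_sum_of_halves)
  qed
qed

lemma usc_max:
  assumes "usc f" "compact K" "K \<noteq> {}"
  shows "\<exists>x\<in>K. \<forall>y\<in>K. f y \<le> f x"
proof (rule ccontr)
  assume "\<not> ?thesis"
  hence nm: "\<forall>x\<in>K. \<exists>y\<in>K. f x < f y" by (auto simp: not_le)
  have cov: "K \<subseteq> (\<Union>y\<in>K. {x. f x < f y})" using nm by blast
  obtain C' where C': "C' \<subseteq> K" "finite C'" "K \<subseteq> (\<Union>y\<in>C'. {x. f x < f y})"
    using compactE_image[OF assms(2) usc_open[OF assms(1)] cov] by blast
  have "C' \<noteq> {}" using C'(3) assms(3) by auto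
  hence "Max (f ` C') \<in> f ` C'" using C'(2) by (intro Max_in) auto
  then obtain y0 where y00: "y0 \<in> C'" "f y0 = Max (f ` C')" by auto
  have y0: "y0 \<in> C'" "\<And>y. y \<in> C' \<Longrightarrow> f y \<le> f y0"
    using y00 C'(2) by auto
  have "y0 \<in> K" using y0 C' by auto
  then obtain y where "y \<in> C'" "f y0 < f y" using C'(3) by blast
  thus False using y0(2)[of y] by simp
qed

lemma annulus_max:
  fixes f :: "real^'n \<Rightarrow> real"
  assumes usc: "usc f" and r: "0 < ra" "ra < rb"
    and in1: "\<And>x. dist c x = ra \<Longrightarrow> f x < 0"
    and out1: "\<And>x. dist c x = rb \<Longrightarrow> f x < 0"
    and y: "ra \<le> dist c y" "dist c y \<le> rb" "f y \<ge> 0"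
  shows "\<exists>x0. ra < dist c x0 \<and> dist c x0 < rb \<and> f x0 \<ge> 0 \<and> (\<forall>\<^sub>F x in at x0. f x \<le> f x0)"
proof -
  define K where "K = cball c rb - ball c ra"
  have cK: "compact K" unfolding K_def by (intro compact_diff compact_cball open_ball)
  have yK: "y \<in> K" using y by (auto simp: K_def)
  obtain x0 where x0: "x0 \<in> K" "\<And>z. z \<in> K \<Longrightarrow> f z \<le> f x0"
    using usc_max[OF usc cK] yK by blast
  have fx0: "f x0 \<ge> 0" using x0(2)[OF yK] y(3) by simp
  have d1: "ra < dist c x0"
  proof -
    have "ra \<le> dist c x0" using x0(1) by (auto simp: K_def)
    moreover have "dist c x0 \<noteq> ra" using in1 fx0 by force
    ultimately show ?thesis by simp
  qed
  have d2: "dist c x0 < rb"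
  proof -
    have "dist c x0 \<le> rb" using x0(1) by (auto simp: K_def)
    moreover have "dist c x0 \<noteq> rb" using out1 fx0 by force
    ultimately show ?thesis by simp
  qed
  define A where "A = ball c rb - cball c ra"
  have oA: "open A" unfolding A_def by (intro open_Diff open_ball closed_cball)
  have x0A: "x0 \<in> A" using d1 d2 by (auto simp: A_def)
  have AK: "A \<subseteq> K" by (auto simp: A_def K_def)
  have "\<forall>\<^sub>F x in at x0. f x \<le> f x0"
    unfolding eventually_at_topological using oA x0A AK x0(2) by blast
  thus ?thesis using d1 d2 fx0 by blast
qed

lemma loc_lip_cont:
  fixes f :: "real^'n \<Rightarrow> 'b::metric_space"
  assumes "loc_lipschitz f" shows "continuous_on UNIV f"
proof -
  have "isCont f x" for x
  proof -
    obtain r L where "r > 0" and Lr: "L-lipschitz_on (cball x r) f" using assms unfolding loc_lipschitz_def by blast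
    from Lr have "continuous_on (cball x r) f" by (rule lipschitz_on_continuous_on)
    thus ?thesis using \<open>r > 0\<close>
      by (metis centre_in_ball continuous_on_interior interior_cball)
  qed
  thus ?thesis by (simp add: continuous_at_imp_continuous_on)
qed



lemma dist_sq: "(x-c)\<bullet>(x-c) = (dist c (x::real^'n))^2"
  by (metis dist_norm dist_commute power2_norm_eq_inner)

lemma step3:
  fixes F :: "real^'n \<Rightarrow> real \<Rightarrow> real^'n \<Rightarrow> real^'n^'n \<Rightarrow> real"
    and bb :: "real^'n \<Rightarrow> real^'n" and g cc :: "real^'n \<Rightarrow> real" and u :: "real^'n \<Rightarrow> real"
  assumes lam_pos: "0 < lam"
    and elliptic: "\<And>x t p X Q. symmetric_mat X \<Longrightarrow> psd Q \<Longrightarrow>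
        lam * trace Q \<le> F x t p X - F x t p (X + Q) \<and> F x t p X - F x t p (X + Q) \<le> Lam * trace Q"
    and F_lower: "\<And>x t p. F x t p 0 \<ge> - (bb x \<bullet> p) - g x * norm p + cc x * t"
    and bbc: "continuous_on UNIV bb" and gc: "continuous_on UNIV g"
    and cc_nonneg: "\<And>x. cc x \<ge> 0" and g_nonneg: "\<And>x. g x \<ge> 0"
    and sub: "visc_subsolution F u"
    and alt: "(\<forall>x. cc x = 0) \<or> (\<forall>x. u x \<ge> 0)"
    and zmax: "\<And>x. u x \<le> u z"
  shows "u x = u z"
proof (rule ccontr)
  define m where "m = u z"
  assume "u x \<noteq> u z"
  hence uy: "u x < m" using zmax[of x] by (simp add: m_def)
  define y where "y = x"
  have uy: "u y < m" using uy by (simp add: y_def)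
  have usc: "usc u" using sub by (simp add: visc_subsolution_def)
  have test: "\<And>phi Dphi Hphi x0. C2_with phi Dphi Hphi \<Longrightarrow>
        (\<forall>\<^sub>F x in at x0. u x - phi x \<le> u x0 - phi x0) \<Longrightarrow> F x0 (u x0) (Dphi x0) (Hphi x0) \<le> 0"
    using sub unfolding visc_subsolution_def by blast
  have cct: "cc w * u w \<ge> 0" for w using alt cc_nonneg[of w] by auto
  define K where "K = {x. m \<le> u x}"
  have "open (- K)" using usc_open[OF usc, of m] by (simp add: K_def Compl_eq not_le)
  hence cK: "closed K" by (simp add: closed_def)
  have "z \<in> K" by (simp add: K_def m_def)
  then obtain x1 where x1: "x1 \<in> K" "\<And>w. w \<in> K \<Longrightarrow> dist y x1 \<le> dist y w"
    using distance_attains_inf[OF cK] by blast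
  define \<rho> where "\<rho> = dist y x1"
  have "y \<noteq> x1" using x1(1) uy by (auto simp: K_def)
  hence rho: "\<rho> > 0" by (simp add: \<rho>_def)
  have inner: "u w < m" if "dist y w < \<rho>" for w
    using x1(2)[of w] that by (force simp: K_def \<rho>_def)
  obtain w0 where w0: "w0 \<in> cball y (\<rho>/2)" "\<And>w. w \<in> cball y (\<rho>/2) \<Longrightarrow> u w \<le> u w0"
    using usc_max[OF usc compact_cball, of y "\<rho>/2"] rho by auto
  have "u w0 < m" using w0(1) rho by (intro inner) auto
  define \<eta> where "\<eta> = m - u w0"
  have eta: "\<eta> > 0" using \<open>u w0 < m\<close> by (simp add: \<eta>_def)
  define \<delta> where "\<delta> = \<eta>/2"
  have delta: "\<delta> > 0" using eta by (simp add: \<delta>_def)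
  have "bounded ((\<lambda>x. norm (bb x) + g x) ` cball y (2*\<rho>))"
    by (intro compact_imp_bounded compact_continuous_image compact_cball continuous_intros
         continuous_on_subset[OF bbc] continuous_on_subset[OF gc]) auto
  then obtain B where B: "B > 0" "\<And>x. x \<in> cball y (2*\<rho>) \<Longrightarrow> norm (norm (bb x) + g x) \<le> B"
    by (auto simp: bounded_pos)
  define N1 where "N1 = real CARD('n) - 1"
  define \<alpha> where "\<alpha> = max (2/\<rho>^2) ((2 * (2*\<rho>*B + Lam*N1 + lam) + 2) / (lam*\<rho>^2))"
  have alpha_pos: "\<alpha> > 0" using rho by (simp add: \<alpha>_def less_max_iff_disj)
  define h where "h = (\<lambda>s. m - \<delta> * exp (-\<alpha>* s) + \<delta> * exp (-\<alpha>*\<rho>^2))"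
  define h1 where "h1 = (\<lambda>s. \<alpha> * \<delta> * exp (-\<alpha>* s))"
  define h2 where "h2 = (\<lambda>s. - (\<alpha>^2 * \<delta> * exp (-\<alpha>* s)))"
  have dh: "(h has_real_derivative h1 s) (at s)" for s
    unfolding h_def h1_def by (auto intro!: derivative_eq_intros simp: algebra_simps)
  have dh1: "(h1 has_real_derivative h2 s) (at s)" for s
    unfolding h2_def h1_def by (auto intro!: derivative_eq_intros simp: algebra_simps power2_eq_square)
  have ch2: "isCont h2 s" for s unfolding h2_def by (intro continuous_intros)
  define phi where "phi = (\<lambda>x. h ((x-y)\<bullet>(x-y)))"
  have C2: "C2_with phi (\<lambda>x. (2 * h1 ((x-y)\<bullet>(x-y))) *\<^sub>R (x - y))
     (\<lambda>x. (2 * h1 ((x-y)\<bullet>(x-y))) *\<^sub>R mat 1 + (4 * h2 ((x-y)\<bullet>(x-y))) *\<^sub>R outer (x-y) (x-y))"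
    unfolding phi_def by (rule C2_radial[OF dh dh1 ch2])
  have phic: "continuous_on UNIV phi" unfolding phi_def h_def by (intro continuous_intros)
  have phiv: "phi w = m - \<delta> * exp (-\<alpha>*(dist y w)^2) + \<delta> * exp (-\<alpha>*\<rho>^2)" for w
    by (simp add: phi_def h_def dist_sq)
  have uscf: "usc (\<lambda>x. u x - phi x)" by (rule usc_diff_cont[OF usc phic])
  obtain x0 where x0: "\<rho>/2 < dist y x0" "dist y x0 < 2*\<rho>" "u x0 - phi x0 \<ge> 0"
      "\<forall>\<^sub>F x in at x0. u x - phi x \<le> u x0 - phi x0"
  proof -
    have in1: "u w - phi w < 0" if "dist y w = \<rho>/2" for w
    proof -
      have "u w \<le> m - \<eta>" using w0(2)[of w] that by (simp add: \<eta>_def)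
      moreover have "exp (-\<alpha>*(dist y w)^2) \<le> 1" using alpha_pos by simp
      hence "\<delta> * exp (-\<alpha>*(dist y w)^2) \<le> \<delta>" using delta by (simp add: mult_left_le)
      moreover have "\<delta> * exp (-\<alpha>*\<rho>^2) \<ge> 0" using delta by simp
      moreover have "\<eta> = 2*\<delta>" by (simp add: \<delta>_def)
      ultimately show ?thesis using phiv[of w] eta by linarith
    qed
    have out1: "u w - phi w < 0" if "dist y w = 2*\<rho>" for w
    proof -
      have "u w \<le> m" using zmax by (simp add: m_def)
      moreover have "exp (-\<alpha>*(dist y w)^2) < exp (-\<alpha>*\<rho>^2)"
        using that alpha_pos rho by (simp add: power2_eq_square)
      hence "\<delta> * exp (-\<alpha>*(dist y w)^2) < \<delta> * exp (-\<alpha>*\<rho>^2)" using delta by simp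
      ultimately show ?thesis using phiv[of w] by linarith
    qed
    have "u x1 - phi x1 \<ge> 0" using x1(1) phiv[of x1] by (simp add: K_def \<rho>_def)
    then show ?thesis
    proof -
      have "\<exists>x0. \<rho>/2 < dist y x0 \<and> dist y x0 < 2*\<rho> \<and> u x0 - phi x0 \<ge> 0 \<and>
           (\<forall>\<^sub>F x in at x0. u x - phi x \<le> u x0 - phi x0)"
        by (rule annulus_max[where ra="\<rho>/2" and rb="2*\<rho>" and c=y and y=x1])
           (use uscf rho in1 out1 \<open>u x1 - phi x1 \<ge> 0\<close> in \<open>auto simp: \<rho>_def\<close>)
      thus ?thesis using that by blast
    qed
  qed
  define s where "s = (x0-y)\<bullet>(x0-y)"
  have s_eq: "s = (dist y x0)^2" by (simp add: s_def dist_sq)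
  define E where "E = exp (-\<alpha>* s)"
  have E: "E > 0" by (simp add: E_def)
  define a where "a = 2 * h1 s"
  define b where "b = 4 * h2 s"
  have a_eq: "a = 2*\<alpha>*\<delta>*E" by (simp add: a_def h1_def E_def)
  have b_eq: "b = -4*\<alpha>^2*\<delta>*E" by (simp add: b_def h2_def E_def)
  have apos: "a > 0" using a_eq alpha_pos delta E by simp
  have s_lo: "s \<ge> \<rho>^2/4"
  proof -
    have "(\<rho>/2)^2 \<le> (dist y x0)^2" using x0(1) rho by (intro power_mono) auto
    thus ?thesis by (simp add: s_eq power_divide)
  qed
  have as1: "2*\<alpha>* s \<ge> 1"
  proof -
    have "\<alpha> \<ge> 2/\<rho>^2" by (simp add: \<alpha>_def)
    hence "2*\<alpha>* s \<ge> 2*(2/\<rho>^2)*(\<rho>^2/4)" using s_lo rho alpha_pos by (intro mult_mono) auto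
    thus ?thesis using rho by simp
  qed
  have abs: "a + b * (d \<bullet> d) \<le> 0" if "d = x0 - y" for d
  proof -
    have "a + b * s = a * (1 - 2*\<alpha>* s)" by (simp add: a_eq b_eq power2_eq_square algebra_simps)
    also have "\<dots> \<le> 0" using apos as1 by (simp add: mult_nonpos_nonneg mult_le_0_iff)
    finally show ?thesis using that by (simp add: s_def)
  qed
  have d0: "x0 - y \<noteq> 0" using x0(1) rho by auto
  define p where "p = a *\<^sub>R (x0 - y)"
  have Fle: "F x0 (u x0) p (a *\<^sub>R mat 1 + b *\<^sub>R outer (x0-y) (x0-y)) \<le> 0"
    using test[OF C2 x0(4)] by (simp add: a_def b_def p_def s_def)
  have Fge: "F x0 (u x0) p (a *\<^sub>R mat 1 + b *\<^sub>R outer (x0-y) (x0-y)) \<ge>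
      F x0 (u x0) p 0 - Lam * a * N1 - lam*(a + b* s)"
    using F_radial_bound[where F=F and a=a and b=b and d="x0-y" and x=x0 and t="u x0" and p=p,
        OF elliptic _ abs[OF refl] d0] apos
    by (simp add: N1_def s_def)
  have bbp: "bb x0 \<bullet> p \<le> norm (bb x0) * (a * dist y x0)"
    using norm_cauchy_schwarz[of "bb x0" p] apos by (simp add: p_def dist_norm norm_minus_commute)
  have np: "norm p = a * dist y x0" using apos by (simp add: p_def dist_norm norm_minus_commute)
  have F0: "F x0 (u x0) p 0 \<ge> - a * ((norm (bb x0) + g x0) * dist y x0)"
    using F_lower[where x=x0 and t="u x0" and p=p] bbp np cct[of x0] by (simp add: algebra_simps)
  have Bx: "(norm (bb x0) + g x0) * dist y x0 \<le> B * (2*\<rho>)"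
  proof -
    have "norm (bb x0) + g x0 \<le> B" using B(2)[of x0] x0(2) by auto
    moreover have "0 \<le> norm (bb x0) + g x0" using g_nonneg[of x0] by simp
    ultimately show ?thesis using x0(2) B(1) by (intro mult_mono) auto
  qed
  have b_a: "b = -2*\<alpha>*a" by (simp add: a_eq b_eq power2_eq_square)
  have key: "2*lam*\<alpha>* s > 2*\<rho>*B + Lam*N1 + lam"
  proof -
    define C where "C = 2 * (2*\<rho>*B + Lam*N1 + lam) + 2"
    have "\<alpha> \<ge> C / (lam*\<rho>^2)" by (simp add: \<alpha>_def C_def)
    hence "\<alpha> * (lam*\<rho>^2) \<ge> C" using lam_pos rho by (simp add: field_simps)
    moreover have "2*lam*\<alpha>* s \<ge> 2*lam*\<alpha>*(\<rho>^2/4)"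
      using s_lo lam_pos alpha_pos by simp
    ultimately have "2*lam*\<alpha>* s \<ge> C/2" by (simp add: algebra_simps)
    thus ?thesis by (simp add: C_def)
  qed
  have "F x0 (u x0) p (a *\<^sub>R mat 1 + b *\<^sub>R outer (x0-y) (x0-y)) \<ge>
      a * (2*lam*\<alpha>* s - (norm (bb x0) + g x0) * dist y x0 - Lam*N1 - lam)"
    using Fge F0 b_a by (simp add: algebra_simps)
  moreover have "a * (2*lam*\<alpha>* s - (norm (bb x0) + g x0) * dist y x0 - Lam*N1 - lam) > 0"
    using apos key Bx by (intro mult_pos_pos) (auto simp: algebra_simps)
  ultimately show False using Fle by linarith
qed



lemma id1: fixes s e :: real assumes p: "s+1 > 0"
  shows "2*(e*(s+3)/(s+1)^2) + (-(2*e*(s+5)/(s+1)^3))* s = 2*e*(3 - s)/(s+1)^3"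
proof -
  define q where "q = s + 1"
  have s: "s = q - 1" and q: "q \<noteq> 0" using p by (auto simp: q_def)
  show ?thesis unfolding s using q by (simp add: divide_simps) algebra
qed
lemma id2: fixes s :: real assumes p: "s+1 > 0"
  shows "(s+3)/(s+1)^2 * s = 1 + (s-1)/(s+1)^2"
proof -
  define q where "q = s + 1"
  have s: "s = q - 1" and q: "q \<noteq> 0" using p by (auto simp: q_def)
  show ?thesis unfolding s using q by (simp add: divide_simps) algebra
qed
lemma id3: fixes s e :: real assumes p: "s+1 > 0"
  shows "e*(s+3)/(s+1)^2 + (-(2*e*(s+5)/(s+1)^3))* s = e*(3 - s^2 - 6* s)/(s+1)^3"
proof -
  define q where "q = s + 1"
  have s: "s = q - 1" and q: "q \<noteq> 0" using p by (auto simp: q_def)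
  show ?thesis unfolding s using q by (simp add: divide_simps) algebra
qed

lemma num1: fixes s \<epsilon> :: real assumes "s > 3" "\<epsilon> > 0"
  shows "2*(\<epsilon>*(s+3)/(s+1)^2) + (-(2*\<epsilon>*(s+5)/(s+1)^3))* s < 0"
proof -
  have p: "(s+1) > 0" using assms by simp
  have "2*(\<epsilon>*(s+3)/(s+1)^2) + (-(2*\<epsilon>*(s+5)/(s+1)^3))* s = 2*\<epsilon>*(3 - s)/(s+1)^3"
    by (rule id1[OF p])
  also have "\<dots> < 0" using assms p by (intro divide_neg_pos) (auto intro: mult_pos_neg)
  finally show ?thesis .
qed

lemma num2: fixes s \<epsilon> :: real assumes "s \<ge> 1" "\<epsilon> > 0"
  shows "\<epsilon>*(s+3)/(s+1)^2 + (-(2*\<epsilon>*(s+5)/(s+1)^3))* s \<le> 0"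
proof -
  have p: "(s+1) > 0" using assms by simp
  have "\<epsilon>*(s+3)/(s+1)^2 + (-(2*\<epsilon>*(s+5)/(s+1)^3))* s = \<epsilon>*(3 - s^2 - 6* s)/(s+1)^3"
    by (rule id3[OF p])
  also have "\<dots> \<le> 0"
  proof -
    have "s^2 \<ge> 1" using assms by (simp add: one_le_power)
    hence "3 - s^2 - 6* s \<le> 0" using assms \<open>s^2 \<ge> 1\<close> by linarith
    thus ?thesis using assms p by (intro divide_nonpos_pos mult_nonneg_nonpos) auto
  qed
  finally show ?thesis .
qed

lemma num3: fixes s \<epsilon> :: real assumes "s \<ge> 0" "\<epsilon> > 0"
  shows "\<epsilon>*(s+3)/(s+1)^2 * s * (ln (1+s)/2) \<le> \<epsilon> * (ln(1+s)/2 + 1)"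
proof -
  define L where "L = ln (1+s)/2"
  have L0: "L \<ge> 0" using assms by (simp add: L_def)
  have Ls: "L \<le> s/2" using ln_le_minus_one[of "1+s"] assms by (simp add: L_def)
  have p: "(s+1) > 0" using assms by simp
  have eq: "(s+3)/(s+1)^2 * s = 1 + (s-1)/(s+1)^2" by (rule id2[OF p])
  have "L * (s-1) \<le> (s+1)^2"
  proof (cases "s \<ge> 1")
    case True
    hence "L * (s-1) \<le> s/2 * (s-1)" using Ls by (intro mult_right_mono) auto
    also have "\<dots> \<le> (s+1)^2" using assms by (simp add: power2_eq_square algebra_simps)
    finally show ?thesis .
  next
    case False
    hence "L * (s-1) \<le> 0" using L0 by (simp add: mult_nonneg_nonpos)
    thus ?thesis by (smt (verit) zero_le_power2)
  qed
  hence le1: "L * ((s-1)/(s+1)^2) \<le> 1" using p by (simp add: field_simps)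
  have "\<epsilon>*(s+3)/(s+1)^2 * s * L = \<epsilon>*(((s+3)/(s+1)^2 * s) * L)" by simp
  also have "\<dots> = \<epsilon>*(L + L*((s-1)/(s+1)^2))" unfolding eq by (simp add: algebra_simps)
  also have "\<dots> \<le> \<epsilon> * (L + 1)" using assms le1 by simp
  finally show ?thesis by (simp add: L_def)
qed



lemma f_lower:
  fixes n :: real assumes "n > 0"
  shows "ln n \<le> ln (1 + n^2)/2" "ln n - 1 \<le> ln (1 + n^2)/2 - 1/(1 + n^2)"
proof -
  have "ln (n^2) \<le> ln (1 + n^2)" using assms by (subst ln_le_cancel_iff) (auto intro: add_pos_nonneg)
  moreover have "ln (n^2) = 2 * ln n" using assms by (simp add: ln_realpow)
  ultimately show 1: "ln n \<le> ln (1 + n^2)/2" by simp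
  have "1/(1 + n^2) \<le> 1" by (simp add: add_pos_nonneg)
  thus "ln n - 1 \<le> ln (1 + n^2)/2 - 1/(1 + n^2)" using 1 by linarith
qed

lemma test_deriv:
  fixes A B e WR :: real assumes "s \<ge> 0"
  shows "((\<lambda>s. A + e * ((ln (1+s)/2 - 1/(1+s)) - WR)) has_real_derivative (e*(s+3)/(2*(s+1)^2))) (at s)"
proof -
  have p: "1 + s > 0" using assms by simp
  have "((\<lambda>s. A + e * ((ln (1+s)/2 - 1/(1+s)) - WR)) has_real_derivative
          (e * ((1/(1+s))/2 + 1/(1+s)^2))) (at s)"
    using p by (auto intro!: derivative_eq_intros simp: power2_eq_square field_simps)
  moreover have "e * ((1/(1+s))/2 + 1/(1+s)^2) = e*(s+3)/(2*(s+1)^2)"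
  proof -
    define q where "q = s + 1"
    have s: "s = q - 1" and q: "q \<noteq> 0" using p by (auto simp: q_def)
    show ?thesis unfolding s using q by (simp add: divide_simps) algebra
  qed
  ultimately show ?thesis by simp
qed

lemma test_deriv2:
  fixes e :: real assumes "s \<ge> 0"
  shows "((\<lambda>s. e*(s+3)/(2*(s+1)^2)) has_real_derivative (-(e*(s+5)/(2*(s+1)^3)))) (at s)"
proof -
  have p: "1 + s > 0" "s + 1 \<noteq> 0" using assms by auto
  have "((\<lambda>s. e*(s+3)/(2*(s+1)^2)) has_real_derivative
     ((e * (2*(s+1)^2) - e*(s+3) * (2*(2*(s+1)))) / (2*(s+1)^2)^2)) (at s)"
    using p by (auto intro!: derivative_eq_intros simp: power2_eq_square)
  moreover have "(e * (2*(s+1)^2) - e*(s+3) * (2*(2*(s+1)))) / (2*(s+1)^2)^2 = -(e*(s+5)/(2*(s+1)^3))"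
  proof -
    define q where "q = s + 1"
    have s: "s = q - 1" and q: "q \<noteq> 0" using p by (auto simp: q_def)
    show ?thesis unfolding s using q by (simp add: divide_simps) algebra
  qed
  ultimately show ?thesis by simp
qed

lemma step1:
  fixes F :: "real^'n \<Rightarrow> real \<Rightarrow> real^'n \<Rightarrow> real^'n^'n \<Rightarrow> real"
    and bb :: "real^'n \<Rightarrow> real^'n" and g cc :: "real^'n \<Rightarrow> real" and u :: "real^'n \<Rightarrow> real"
  assumes lam_pos: "0 < lam"
    and elliptic: "\<And>x t p X Q. symmetric_mat X \<Longrightarrow> psd Q \<Longrightarrow>
        lam * trace Q \<le> F x t p X - F x t p (X + Q) \<and> F x t p X - F x t p (X + Q) \<le> Lam * trace Q"
    and F_lower: "\<And>x t p. F x t p 0 \<ge> - (bb x \<bullet> p) - g x * norm p + cc x * t"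
    and cc_nonneg: "\<And>x. cc x \<ge> 0"
    and Ro_pos: "Ro > 0"
    and growth: "\<And>x. norm x \<ge> Ro \<Longrightarrow>
        bb x \<bullet> x + g x * norm x \<le> cc x * (norm x)\<^sup>2 * ln (norm x) + lam - (real CARD('n) - 1) * Lam"
    and sub: "visc_subsolution F u"
    and limsup: "Limsup at_infinity (\<lambda>x. ereal (u x / ln (norm x))) \<le> 0"
    and alt: "(\<forall>x. cc x = 0) \<or> (\<forall>x. u x \<ge> 0)"
  shows "\<exists>z. \<forall>x. u x \<le> u z"
proof -
  have usc: "usc u" using sub by (simp add: visc_subsolution_def)
  have test: "\<And>phi Dphi Hphi x0. C2_with phi Dphi Hphi \<Longrightarrow>
        (\<forall>\<^sub>F x in at x0. u x - phi x \<le> u x0 - phi x0) \<Longrightarrow> F x0 (u x0) (Dphi x0) (Hphi x0) \<le> 0"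
    using sub unfolding visc_subsolution_def by blast
  define R where "R = max Ro 2"
  have R2: "R \<ge> 2" and RRo: "R \<ge> Ro" by (auto simp: R_def)
  obtain z where z: "z \<in> cball 0 R" "\<And>w. w \<in> cball 0 R \<Longrightarrow> u w \<le> u z"
    using usc_max[OF usc compact_cball, of 0 R] R2 by auto
  have "u y \<le> u z" for y
  proof (rule ccontr)
    assume "\<not> u y \<le> u z"
    hence uy: "u y > u z" by simp
    have ny: "norm y > R" using z(2)[of y] uy by (force simp: not_le)
    define \<delta> where "\<delta> = (u y - u z)/2"
    have delta: "\<delta> > 0" using uy by (simp add: \<delta>_def)
    define f where "f = (\<lambda>s::real. ln (1+s)/2 - 1/(1+s))"
    define WR where "WR = f (R^2)"
    define Wy where "Wy = f ((norm y)^2)"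
    define \<epsilon> where "\<epsilon> = \<delta> / (\<bar>Wy\<bar> + \<bar>WR\<bar> + 3)"
    have den: "\<bar>Wy\<bar> + \<bar>WR\<bar> + 3 > 0" by simp
    have eps: "\<epsilon> > 0" using delta den by (simp add: \<epsilon>_def)
    have epsd: "\<epsilon> * (\<bar>Wy\<bar> + \<bar>WR\<bar> + 3) = \<delta>" using den by (simp add: \<epsilon>_def)
    have e1: "\<epsilon> * (Wy - WR) < \<delta>"
    proof -
      have "\<epsilon> * (Wy - WR) \<le> \<epsilon> * (\<bar>Wy\<bar> + \<bar>WR\<bar>)" using eps by (intro mult_left_mono) auto
      thus ?thesis using epsd eps by (simp add: algebra_simps)
    qed
    have e2: "\<epsilon> * (2 + WR) \<le> \<delta>"
    proof -
      have "\<epsilon> * (2 + WR) \<le> \<epsilon> * (\<bar>Wy\<bar> + \<bar>WR\<bar> + 3)" using eps by (intro mult_left_mono) auto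
      thus ?thesis using epsd by simp
    qed
    define h where "h = (\<lambda>s. (u z + \<delta>) + \<epsilon> * ((ln (1+s)/2 - 1/(1+s)) - WR))"
    define h1 where "h1 = (\<lambda>s::real. \<epsilon>*(s+3)/(2*(s+1)^2))"
    define h2 where "h2 = (\<lambda>s::real. -(\<epsilon>*(s+5)/(2*(s+1)^3)))"
    have dh: "(h has_real_derivative h1 s) (at s)" if "s \<ge> 0" for s
      unfolding h_def h1_def by (rule test_deriv[OF that])
    have dh1: "(h1 has_real_derivative h2 s) (at s)" if "s \<ge> 0" for s
      unfolding h2_def h1_def by (rule test_deriv2[OF that])
    have ch2: "isCont h2 s" if "s \<ge> 0" for s
      unfolding h2_def using that by (intro continuous_intros) auto
    define phi where "phi = (\<lambda>x::real^'n. h ((x-0)\<bullet>(x-0)))"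
    have C2: "C2_with phi (\<lambda>x. (2 * h1 ((x-0)\<bullet>(x-0))) *\<^sub>R (x - 0))
       (\<lambda>x. (2 * h1 ((x-0)\<bullet>(x-0))) *\<^sub>R mat 1 + (4 * h2 ((x-0)\<bullet>(x-0))) *\<^sub>R outer (x-0) (x-0))"
      unfolding phi_def by (rule C2_radial[OF dh dh1 ch2])
    have phiv: "phi w = u z + \<delta> + \<epsilon> * (f ((norm w)^2) - WR)" for w
      by (simp add: phi_def h_def f_def power2_norm_eq_inner)
    have ne: "1 + x\<bullet>x \<noteq> 0" for x :: "real^'n" by (smt (verit) inner_ge_zero)
    have phic: "continuous_on UNIV phi"
      unfolding phi_def h_def
      by (intro continuous_intros) (auto simp: ne add_pos_nonneg)
    have uscf: "usc (\<lambda>x. u x - phi x)" by (rule usc_diff_cont[OF usc phic])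
    obtain b0 where b0: "\<And>x. b0 \<le> norm x \<Longrightarrow> u x / ln (norm x) < \<epsilon>/2"
    proof -
      have "Limsup at_infinity (\<lambda>x. ereal (u x / ln (norm x))) < ereal (\<epsilon>/2)"
        using limsup eps by (metis ereal_less(2) half_gt_zero le_less_trans zero_ereal_def)
      hence "eventually (\<lambda>x. ereal (u x / ln (norm x)) < ereal (\<epsilon>/2)) at_infinity"
        by (rule Limsup_lessD)
      then obtain b where "\<forall>x. b \<le> norm x \<longrightarrow> ereal (u x / ln (norm x)) < ereal (\<epsilon>/2)"
        unfolding eventually_at_infinity by blast
      thus ?thesis using that by auto
    qed
    define C0 where "C0 = \<epsilon>*(1+WR) - u z - \<delta>"
    define K where "K = 2*\<bar>C0\<bar>/\<epsilon>"
    define \<rho> where "\<rho> = max (max b0 (R+1)) (max (norm y + 1) 2) + exp K"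
    have rho: "\<rho> \<ge> b0" "\<rho> > R" "\<rho> > norm y" "\<rho> > 2" "\<rho> > exp K"
    proof -
      define M0 where "M0 = max (max b0 (R+1)) (max (norm y + 1) 2)"
      have "M0 \<ge> b0" "M0 \<ge> R + 1" "M0 \<ge> norm y + 1" "M0 \<ge> 2" by (auto simp: M0_def)
      moreover have "exp K > 0" by simp
      moreover have "\<rho> = M0 + exp K" by (simp add: \<rho>_def M0_def)
      ultimately show "\<rho> \<ge> b0" "\<rho> > R" "\<rho> > norm y" "\<rho> > 2" "\<rho> > exp K" by linarith+
    qed
    have "ln (exp K) < ln \<rho>" using rho(5) rho(4) by (subst ln_less_cancel_iff) auto
    hence lnr: "ln \<rho> > K" by simp
    have lnr2: "\<epsilon> * ln \<rho> > 2*\<bar>C0\<bar>" using lnr eps by (simp add: K_def field_simps)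
    have in1: "u w - phi w < 0" if "dist 0 w = R" for w
    proof -
      have "u w \<le> u z" using z(2)[of w] that by simp
      moreover have "phi w = u z + \<delta>" using that by (simp add: phiv WR_def)
      ultimately show ?thesis using delta by simp
    qed
    have out1: "u w - phi w < 0" if "dist 0 w = \<rho>" for w
    proof -
      have nw: "norm w = \<rho>" using that by simp
      have lnpos: "ln \<rho> > 0" using rho(4) by simp
      have "u w / ln \<rho> < \<epsilon>/2" using b0[of w] rho(1) nw by simp
      hence uw: "u w < \<epsilon>/2 * ln \<rho>" using lnpos by (simp add: pos_divide_less_eq)
      have "ln \<rho> - 1 \<le> f (\<rho>^2)" using f_lower(2)[of \<rho>] rho(4) by (simp add: f_def)
      hence "\<epsilon> * (ln \<rho> - 1 - WR) \<le> \<epsilon> * (f (\<rho>^2) - WR)" using eps by simp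
      hence "phi w \<ge> u z + \<delta> + \<epsilon> * ln \<rho> - \<epsilon> - \<epsilon> * WR" using nw by (simp add: phiv algebra_simps)
      moreover have "\<epsilon> + \<epsilon>*WR - u z - \<delta> \<le> \<bar>C0\<bar>"
        using abs_ge_self[of C0] by (simp add: C0_def algebra_simps)
      moreover have "\<epsilon>/2 * ln \<rho> = (\<epsilon> * ln \<rho>)/2" by simp
      ultimately show ?thesis using uw lnr2 by linarith
    qed
    have yfact: "u y - phi y \<ge> 0"
    proof -
      have "phi y = u z + \<delta> + \<epsilon> * (Wy - WR)" by (simp add: phiv Wy_def)
      moreover have "u y = u z + 2*\<delta>" by (simp add: \<delta>_def field_simps)
      ultimately show ?thesis using e1 by linarith
    qed
    obtain x0 where x0: "R < norm x0" "norm x0 < \<rho>" "u x0 - phi x0 \<ge> 0"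
      "\<forall>\<^sub>F x in at x0. u x - phi x \<le> u x0 - phi x0"
    proof -
      have "\<exists>x0. R < dist 0 x0 \<and> dist 0 x0 < \<rho> \<and> u x0 - phi x0 \<ge> 0 \<and>
           (\<forall>\<^sub>F x in at x0. u x - phi x \<le> u x0 - phi x0)"
        by (rule annulus_max[where ra=R and rb=\<rho> and c=0 and y=y])
           (use uscf R2 rho in1 out1 yfact ny in auto)
      thus ?thesis using that by auto
    qed
    define r where "r = norm x0"
    define s where "s = r^2"
    have r2: "r > 2" using x0(1) R2 by (simp add: r_def)
    have s4: "s > 4"
    proof -
      have "2^2 < r^2" using r2 by (intro power_strict_mono) auto
      thus ?thesis by (simp add: s_def)
    qed
    have xx: "(x0-0)\<bullet>(x0-0) = s" by (simp add: s_def r_def power2_norm_eq_inner)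
    define a where "a = \<epsilon>*(s+3)/(s+1)^2"
    define b where "b = -(2*\<epsilon>*(s+5)/(s+1)^3)"
    have a_eq: "2 * h1 s = a" by (simp add: h1_def a_def)
    have b_eq: "4 * h2 s = b" by (simp add: h2_def b_def)
    have apos: "a > 0" using eps s4 by (simp add: a_def)
    define p where "p = a *\<^sub>R x0"
    define t where "t = u x0"
    have Fle: "F x0 t p (a *\<^sub>R mat 1 + b *\<^sub>R outer x0 x0) \<le> 0"
      using test[OF C2 x0(4)] xx a_eq b_eq by (simp add: p_def t_def)
    have x00: "x0 \<noteq> 0" using r2 by (auto simp: r_def)
    have ab: "a + b * (x0 \<bullet> x0) \<le> 0"
      using num2[of s \<epsilon>] s4 eps xx by (simp add: a_def b_def)
    have Fge: "F x0 t p (a *\<^sub>R mat 1 + b *\<^sub>R outer x0 x0) \<ge>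
        F x0 t p 0 - Lam * a * (real CARD('n) - 1) - lam*(a + b * s)"
      using F_radial_bound[where F=F and a=a and b=b and d=x0 and x=x0 and t=t and p=p,
        OF elliptic _ ab x00] apos xx by simp
    have F0: "F x0 t p 0 \<ge> - a * (bb x0 \<bullet> x0 + g x0 * r) + cc x0 * t"
      using F_lower[where x=x0 and t=t and p=p] apos
      by (simp add: p_def r_def algebra_simps)
    have gr: "bb x0 \<bullet> x0 + g x0 * r \<le> cc x0 * s * ln r + lam - (real CARD('n) - 1) * Lam"
      using growth[of x0] x0(1) RRo by (simp add: r_def s_def)
    hence gr': "a * (bb x0 \<bullet> x0 + g x0 * r) \<le> a * (cc x0 * s * ln r + lam - (real CARD('n) - 1) * Lam)"
      using apos by (intro mult_left_mono) auto
    have ccterm: "cc x0 * (t - a * s * ln r) \<ge> 0"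
    proof (cases "cc x0 = 0")
      case True thus ?thesis by simp
    next
      case False
      hence upos: "\<forall>x. u x \<ge> 0" using alt by auto
      define L where "L = ln (1+s)/2"
      have lnrL: "ln r \<le> L" using f_lower(1)[of r] r2 by (simp add: L_def s_def)
      have asL: "a * s * ln r \<le> a * s * L" using apos s4 lnrL by (intro mult_left_mono) auto
      have n3: "a * s * L \<le> \<epsilon> * (L + 1)" using num3[of s \<epsilon>] s4 eps by (simp add: a_def L_def)
      have fs: "f s \<ge> L - 1"
      proof -
        have "1/(1+s) \<le> 1" using s4 by simp
        thus ?thesis by (simp add: f_def L_def)
      qed
      have "t \<ge> phi x0" using x0(3) by (simp add: t_def)
      also have "phi x0 = u z + \<delta> + \<epsilon> * (f s - WR)" by (simp add: phiv s_def r_def)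
      finally have "t \<ge> u z + \<delta> + \<epsilon> * (f s - WR)" .
      moreover have "\<epsilon> * (f s - WR) \<ge> \<epsilon> * (L - 1 - WR)" using fs eps by simp
      moreover have "u z \<ge> 0" using upos by simp
      ultimately have "t - a * s * ln r \<ge> 0" using asL n3 e2 by (simp add: algebra_simps)
      thus ?thesis using cc_nonneg[of x0] by simp
    qed
    have n1: "2*a + b * s < 0" using num1[of s \<epsilon>] s4 eps by (simp add: a_def b_def)
    have "F x0 t p (a *\<^sub>R mat 1 + b *\<^sub>R outer x0 x0) \<ge> cc x0 * (t - a * s * ln r) - lam * (2*a + b * s)"
      using Fge F0 gr' by (simp add: algebra_simps)
    moreover have "lam * (2*a + b * s) < 0" using lam_pos n1 by (simp add: mult_pos_neg)
    ultimately show False using Fle ccterm by linarith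
  qed
  thus ?thesis by blast
qed


theorem corollary3p3:
  fixes F :: "real^'n \<Rightarrow> real \<Rightarrow> real^'n \<Rightarrow> real^'n^'n \<Rightarrow> real"
    and lam Lam :: real
    and bb :: "real^'n \<Rightarrow> real^'n" and g cc :: "real^'n \<Rightarrow> real"
    and Ro :: real and u :: "real^'n \<Rightarrow> real"
  assumes F_cont: "continuous_on {(x, t, p, X). symmetric_mat X} (\<lambda>(x, t, p, X). F x t p X)"
    and lam_pos: "0 < lam" and lam_le: "lam \<le> Lam"
    and elliptic: "\<And>x t p X Q. symmetric_mat X \<Longrightarrow> psd Q \<Longrightarrow>
        lam * trace Q \<le> F x t p X - F x t p (X + Q) \<and> F x t p X - F x t p (X + Q) \<le> Lam * trace Q"
    and F_lower: "\<And>x t p. F x t p 0 \<ge> - (bb x \<bullet> p) - g x * norm p + cc x * t"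
    and bb_lip: "loc_lipschitz bb" and g_lip: "loc_lipschitz g"
    and cc_cont: "continuous_on UNIV cc"
    and g_nonneg: "\<And>x. g x \<ge> 0" and cc_nonneg: "\<And>x. cc x \<ge> 0"
    and Ro_pos: "Ro > 0"
    and growth: "\<And>x. norm x \<ge> Ro \<Longrightarrow>
        bb x \<bullet> x + g x * norm x \<le> cc x * (norm x)\<^sup>2 * ln (norm x) + lam - (real CARD('n) - 1) * Lam"
    and sub: "visc_subsolution F u"
    and limsup: "Limsup at_infinity (\<lambda>x. ereal (u x / ln (norm x))) \<le> 0"
    and alt: "(\<forall>x. cc x = 0) \<or> (\<forall>x. u x \<ge> 0)"
  shows "\<exists>k. \<forall>x. u x = k"
proof -
  have bbc: "continuous_on UNIV bb" by (rule loc_lip_cont[OF bb_lip])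
  have gc: "continuous_on UNIV g" by (rule loc_lip_cont[OF g_lip])
  obtain z where z: "\<And>x. u x \<le> u z"
    using step1[OF lam_pos elliptic F_lower cc_nonneg Ro_pos growth sub limsup alt] by blast
  have "u x = u z" for x
    by (rule step3[OF lam_pos elliptic F_lower bbc gc cc_nonneg g_nonneg sub alt z])
  thus ?thesis by blast
qed

end
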